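(* For every infinite binary sequence $b\in\{0,1\}^{\mathbb N}$, the set $F_b=\{v\in\mathscr C : \rho(v)=b\}$ satisfies $$F_b=\{\langle a\rangle \sigma(b) : a\in\mathbb N^{\mathbb N}\}.$$ Consequently $F_b$ is uncountable, $\sigma(b)$ is the unique element of $F_b$ containing no two consecutive $0$'s, and $\sigma(b)$ is the maximum of $F_b$ with respect to the lexicographic order.
   Context: Binary words are finite or infinite sequences over $\{0,1\}$. Define $\rho$ on binary words: for $b=b_1b_2\dots$, $\rho(b)$ is obtained by deleting every digit $b_n=0$ and replacing every $b_n=1$ by $0$ if $n$ is odd and by $1$ if $n$ is even. Let $\mathscr C$ be the set of infinite binary sequences containing infinitely many $1$'s. Define $\sigma$ on a binary sequence $b=b_1b_2\dots$ as the concatenation $\sigma(b)=s_1s_2\dots$ where $s_1=1$ if $b_1=0$ and $s_1=01$ if $b_1=1$, and for $n\ge2$, $s_n=1$ if $b_n\ne b_{n-1}$ and $s_n=01$ if $b_n=b_{n-1}$. For $a=(a_1,a_2,\dots)\in\mathbb N^{\mathbb N}$ (with $\mathbb N$ including $0$) and $c\in\mathscr C$, $\langle a\rangle c$ denotes the sequence obtained from $c$ by inserting the block $0^{2a_k}$ immediately before the $k$-th occurrence of $1$ in $c$, for every $k\ge1$. *)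

theory Defs
  imports Main "HOL-Library.Infinite_Set" "HOL-Library.Countable_Set"
begin

text \<open>Infinite binary sequences are functions nat => bool (True = 1, False = 0),
  indexed from 0 (position i here is position i+1 in the paper).\<close>

definition C_set :: "(nat \<Rightarrow> bool) set" where
  "C_set = {v. infinite {i. v i}}"

definition onepos :: "(nat \<Rightarrow> bool) \<Rightarrow> nat \<Rightarrow> nat" where
  "onepos v k = enumerate {i. v i} k"

text \<open>rho on sequences of C: the (k+1)-th 1 becomes 1 iff its 1-indexed position
  is even, i.e. iff its 0-indexed position is odd; zeros are deleted.\<close>
definition rho :: "(nat \<Rightarrow> bool) \<Rightarrow> nat \<Rightarrow> bool" where
  "rho v k = odd (onepos v k)"

definition blk_start :: "(nat \<Rightarrow> bool list) \<Rightarrow> nat \<Rightarrow> nat" where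
  "blk_start s n = (\<Sum>i<n. length (s i))"

definition sconcat :: "(nat \<Rightarrow> bool list) \<Rightarrow> nat \<Rightarrow> bool" where
  "sconcat s j = (let n = (LEAST n. j < blk_start s (Suc n)) in s n ! (j - blk_start s n))"

definition sigma_blk :: "(nat \<Rightarrow> bool) \<Rightarrow> nat \<Rightarrow> bool list" where
  "sigma_blk b n =
     (if n = 0 then (if b 0 then [False, True] else [True])
      else (if b n = b (n - 1) then [False, True] else [True]))"

definition sigma :: "(nat \<Rightarrow> bool) \<Rightarrow> nat \<Rightarrow> bool" where
  "sigma b = sconcat (sigma_blk b)"

text \<open>For c in C, c is the concatenation of blocks 0^m 1; block k ends at the (k+1)-th 1.\<close>
definition c_blk :: "(nat \<Rightarrow> bool) \<Rightarrow> nat \<Rightarrow> bool list" where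
  "c_blk c k = map c [(if k = 0 then 0 else Suc (onepos c (k - 1))) ..< Suc (onepos c k)]"

definition insert_zeros :: "(nat \<Rightarrow> nat) \<Rightarrow> (nat \<Rightarrow> bool) \<Rightarrow> nat \<Rightarrow> bool" where
  "insert_zeros a c = sconcat (\<lambda>k. replicate (2 * a k) False @ c_blk c k)"

definition lex_less :: "(nat \<Rightarrow> bool) \<Rightarrow> (nat \<Rightarrow> bool) \<Rightarrow> bool" where
  "lex_less v w = (\<exists>n. (\<forall>i<n. v i = w i) \<and> \<not> v n \<and> w n)"

definition no_two_zeros :: "(nat \<Rightarrow> bool) \<Rightarrow> bool" where
  "no_two_zeros v = (\<forall>i. v i \<or> v (Suc i))"

end

theory Submission
  imports Defs
begin

definition blocks :: "(nat \<Rightarrow> nat) \<Rightarrow> nat \<Rightarrow> bool list" where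
  "blocks m k = replicate (m k) False @ [True]"

fun pos :: "(nat \<Rightarrow> nat) \<Rightarrow> nat \<Rightarrow> nat" where
  "pos m 0 = m 0"
| "pos m (Suc k) = pos m k + Suc (m (Suc k))"

lemma pos_sm: "strict_mono (pos m)"
  by (simp add: strict_mono_Suc_iff)

lemma pos_ge: "n \<le> pos m n"
  by (induction n) auto

lemma B0: "blk_start (blocks m) 0 = 0"
  by (simp add: blk_start_def)

lemma BSuc: "blk_start (blocks m) (Suc k) = Suc (pos m k)"
  by (induction k) (auto simp: blk_start_def blocks_def)

lemma posB: "pos m N = blk_start (blocks m) N + m N"
  by (cases N) (auto simp: B0 BSuc)

lemma sconcat_blocks: "sconcat (blocks m) j \<longleftrightarrow> j \<in> range (pos m)"
proof -
  define N where "N = (LEAST n. j < blk_start (blocks m) (Suc n))"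
  have ex: "j < blk_start (blocks m) (Suc j)" using pos_ge[of j m] by (simp add: BSuc)
  have N1: "j \<le> pos m N" using LeastI[of "\<lambda>n. j < blk_start (blocks m) (Suc n)", OF ex]
    by (simp add: N_def BSuc)
  have N2: "N > 0 \<Longrightarrow> pos m (N - 1) < j"
  proof -
    assume "N > 0"
    then have "N - 1 < N" by simp
    then have "\<not> j < blk_start (blocks m) (Suc (N - 1))"
      unfolding N_def by (rule not_less_Least)
    then show ?thesis by (simp add: BSuc)
  qed
  have BN: "blk_start (blocks m) N \<le> j"
    using N2 by (cases N) (auto simp: B0 BSuc)
  have "sconcat (blocks m) j = (blocks m N ! (j - blk_start (blocks m) N))"
    unfolding sconcat_def N_def[symmetric] by simp
  also have "\<dots> = (j = pos m N)"
    using N1 BN posB[of m N] by (auto simp: blocks_def nth_append)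
  also have "\<dots> = (j \<in> range (pos m))"
  proof
    assume "j \<in> range (pos m)"
    then obtain k where k: "j = pos m k" by auto
    have "\<not> k < N"
    proof
      assume "k < N"
      then have "pos m k \<le> pos m (N - 1)" using pos_sm[of m]
        by (simp add: strict_mono_less_eq)
      with N2 \<open>k < N\<close> k show False by auto
    qed
    moreover have "\<not> N < k"
    proof
      assume "N < k"
      then have "pos m N < pos m k" using pos_sm[of m] by (simp add: strict_mono_less)
      with N1 k show False by auto
    qed
    ultimately show "j = pos m N" using k by auto
  qed auto
  finally show ?thesis .
qed

lemma sconcat_blocks_fun: "sconcat (blocks m) = (\<lambda>j. j \<in> range (pos m))"
  using sconcat_blocks by (rule ext)

lemma enum_range: "strict_mono (p :: nat \<Rightarrow> nat) \<Longrightarrow> enumerate (range p) n = p n"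
proof (induction n)
  case 0
  show ?case unfolding enumerate_0
    by (rule Least_equality) (auto simp: strict_mono_less_eq 0)
next
  case (Suc n)
  have inf: "infinite (range p)" using Suc.prems
    by (simp add: range_inj_infinite strict_mono_imp_inj_on)
  show ?case unfolding enumerate_Suc''[OF inf] Suc.IH[OF Suc.prems]
    apply (rule Least_equality)
    using Suc.prems by (auto simp: strict_mono_less strict_mono_less_eq Suc_le_eq)
qed

lemma blocks_C: "sconcat (blocks m) \<in> C_set"
  by (simp add: C_set_def sconcat_blocks_fun range_inj_infinite strict_mono_imp_inj_on pos_sm)

lemma blocks_onepos: "onepos (sconcat (blocks m)) = pos m"
  by (rule ext) (simp add: onepos_def sconcat_blocks_fun enum_range pos_sm)


lemma range_pos_iff: "x \<in> range (pos m) \<longleftrightarrow> (\<exists>k. x = pos m k)" by auto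

lemma not_in_between:
  assumes "x < pos m k" "k > 0 \<Longrightarrow> pos m (k - 1) < x"
  shows "x \<notin> range (pos m)"
proof
  assume "x \<in> range (pos m)"
  then obtain j where j: "x = pos m j" by auto
  show False
  proof (cases "j < k")
    case True
    then have "pos m j \<le> pos m (k - 1)" using pos_sm[of m] by (simp add: strict_mono_less_eq)
    with assms True j show False by auto
  next
    case False
    then have "pos m k \<le> pos m j" using pos_sm[of m] by (simp add: strict_mono_less_eq)
    with assms j show False by auto
  qed
qed

definition lo :: "(nat \<Rightarrow> nat) \<Rightarrow> nat \<Rightarrow> nat" where
  "lo m k = (if k = 0 then 0 else Suc (pos m (k - 1)))"

lemma pos_lo: "pos m k = lo m k + m k"
  by (cases k) (auto simp: lo_def)

lemma c_blk_blocks: "c_blk (sconcat (blocks m)) k = blocks m k"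
proof -
  have l: "c_blk (sconcat (blocks m)) k = map (sconcat (blocks m)) [lo m k..<Suc (pos m k)]"
    by (simp add: c_blk_def blocks_onepos lo_def)
  show ?thesis unfolding l
  proof (rule nth_equalityI)
    show "length (map (sconcat (blocks m)) [lo m k..<Suc (pos m k)]) = length (blocks m k)"
      using pos_lo[of m k] by (simp add: blocks_def)
  next
    fix i assume "i < length (map (sconcat (blocks m)) [lo m k..<Suc (pos m k)])"
    then have i: "i \<le> m k" using pos_lo[of m k] by simp
    have "map (sconcat (blocks m)) [lo m k..<Suc (pos m k)] ! i = sconcat (blocks m) (lo m k + i)"
      using i pos_lo[of m k] by (simp del: upt_Suc)
    also have "\<dots> = (i = m k)"
    proof (cases "i = m k")
      case True then show ?thesis using pos_lo[of m k] by (simp add: sconcat_blocks) (metis rangeI)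
    next
      case False
      have "lo m k + i \<notin> range (pos m)"
      proof (rule not_in_between)
        show "lo m k + i < pos m k" using False i pos_lo[of m k] by simp
        show "k > 0 \<Longrightarrow> pos m (k - 1) < lo m k + i" by (simp add: lo_def)
      qed
      then show ?thesis using False by (simp add: sconcat_blocks)
    qed
    also have "\<dots> = blocks m k ! i" using i by (auto simp: blocks_def nth_append)
    finally show "map (sconcat (blocks m)) [lo m k..<Suc (pos m k)] ! i = blocks m k ! i" .
  qed
qed

definition ms :: "(nat \<Rightarrow> bool) \<Rightarrow> nat \<Rightarrow> nat" where
  "ms b k = (if k = 0 then (if b 0 then 1 else 0) else (if b k = b (k - 1) then 1 else 0))"

lemma sigma_blocks: "sigma b = sconcat (blocks (ms b))"
  unfolding sigma_def
  by (rule arg_cong[where f = sconcat]) (auto simp: sigma_blk_def blocks_def ms_def)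

lemma insert_blocks: "insert_zeros a (sigma b) = sconcat (blocks (\<lambda>k. 2 * a k + ms b k))"
  unfolding insert_zeros_def sigma_blocks c_blk_blocks
  by (rule arg_cong[where f = sconcat]) (auto simp: blocks_def replicate_add)

lemma ms_0: "ms b 0 = (if b 0 then 1 else 0)" by (simp add: ms_def)
lemma ms_Suc: "ms b (Suc k) = (if b (Suc k) = b k then 1 else 0)" by (simp add: ms_def)

lemma parity: "odd (pos (\<lambda>k. 2 * a k + ms b k) k) = b k"
  by (induction k) (auto simp: ms_0 ms_Suc)

lemma rho_blocks: "rho (sconcat (blocks m)) = (\<lambda>k. odd (pos m k))"
  by (rule ext) (simp add: rho_def blocks_onepos)

lemma pos_inj: "pos m = pos m' \<Longrightarrow> m = m'"
proof (rule ext)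
  fix k assume h: "pos m = pos m'"
  show "m k = m' k"
  proof (cases k)
    case 0 then show ?thesis using fun_cong[OF h, of 0] by simp
  next
    case (Suc j) then show ?thesis using fun_cong[OF h, of j] fun_cong[OF h, of "Suc j"] by simp
  qed
qed

lemma decompose:
  assumes "v \<in> C_set"
  shows "\<exists>m. v = sconcat (blocks m)"
proof -
  define p where "p = onepos v"
  have inf: "infinite {i. v i}" using assms by (simp add: C_set_def)
  have sm: "strict_mono p" unfolding p_def onepos_def using strict_mono_enumerate[OF inf] .
  have rg: "range p = {i. v i}" unfolding p_def onepos_def using range_enumerate[OF inf] .
  define g where "g k = (if k = 0 then p 0 else p k - Suc (p (k - 1)))" for k
  have "pos g k = p k" for k
  proof (induction k)
    case 0 then show ?case by (simp add: g_def)
  next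
    case (Suc k)
    have "p k < p (Suc k)" using sm by (simp add: strict_mono_less)
    then show ?case using Suc by (simp add: g_def)
  qed
  then have "pos g = p" by auto
  then have "v = sconcat (blocks g)" using rg by (auto simp: sconcat_blocks_fun)
  then show ?thesis by blast
qed

lemma F_char:
  assumes "v \<in> C_set" "rho v = b"
  shows "\<exists>a. v = insert_zeros a (sigma b)"
proof -
  obtain g where v: "v = sconcat (blocks g)" using decompose[OF assms(1)] by blast
  have par: "odd (pos g k) = b k" for k using fun_cong[OF assms(2)[unfolded v rho_blocks], of k] by simp
  have "\<exists>a. g k = 2 * a + ms b k" for k
  proof (cases k)
    case 0
    then show ?thesis using par[of 0] by (auto simp: ms_0 elim!: oddE evenE)
  next
    case (Suc j)
    have "odd (pos g j) = b j" "odd (pos g j + Suc (g (Suc j))) = b (Suc j)"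
      using par[of j] par[of "Suc j"] by auto
    then have "odd (g (Suc j)) = (b (Suc j) = b j)" by auto
    then show ?thesis using Suc by (auto simp: ms_Suc elim!: oddE evenE)
  qed
  then obtain a where "\<And>k. g k = 2 * a k + ms b k" by metis
  then have "g = (\<lambda>k. 2 * a k + ms b k)" by auto
  then show ?thesis using v insert_blocks by metis
qed


lemma no2_blocks: "(\<And>k. m k \<le> 1) \<Longrightarrow> no_two_zeros (sconcat (blocks m))"
  unfolding no_two_zeros_def sconcat_blocks_fun
proof
  fix i assume m: "\<And>k. m k \<le> 1"
  define N where "N = (LEAST n. i \<le> pos m n)"
  have ex: "i \<le> pos m i" by (rule pos_ge)
  have N1: "i \<le> pos m N" unfolding N_def by (rule LeastI[of _ i]) (rule ex)
  have N2: "pos m N \<le> Suc i"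
  proof (cases N)
    case 0 then show ?thesis using m[of 0] by simp
  next
    case (Suc j)
    have "j < N" using Suc by simp
    then have "\<not> i \<le> pos m j" unfolding N_def by (rule not_less_Least)
    then show ?thesis using Suc m[of N] by simp
  qed
  show "i \<in> range (pos m) \<or> Suc i \<in> range (pos m)"
    using N1 N2 by (metis le_SucE le_antisym rangeI)
qed

lemma no2_imp: "no_two_zeros (sconcat (blocks m)) \<Longrightarrow> m k \<le> 1"
proof (rule ccontr)
  assume h: "no_two_zeros (sconcat (blocks m))" and "\<not> m k \<le> 1"
  then have mk: "m k \<ge> 2" by simp
  define i where "i = lo m k + (m k - 2)"
  have a: "i \<notin> range (pos m)"
  proof (rule not_in_between)
    show "i < pos m k" using mk pos_lo[of m k] by (simp add: i_def)
    show "k > 0 \<Longrightarrow> pos m (k - 1) < i" by (simp add: lo_def i_def)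
  qed
  have b: "Suc i \<notin> range (pos m)"
  proof (rule not_in_between)
    show "Suc i < pos m k" using mk pos_lo[of m k] by (simp add: i_def)
    show "k > 0 \<Longrightarrow> pos m (k - 1) < Suc i" by (simp add: lo_def i_def)
  qed
  from h a b show False unfolding no_two_zeros_def sconcat_blocks_fun by blast
qed

lemma pos_eq_prefix:
  assumes "\<And>j. j < k \<Longrightarrow> m j = m' j"
  shows "j < k \<Longrightarrow> pos m j = pos m' j"
  by (induction j) (auto simp: assms)

lemma lex_blocks:
  assumes le: "\<And>k. m' k \<le> m k" and ne: "m \<noteq> m'" and big: "\<And>k. m' k \<noteq> m k \<Longrightarrow> m k \<ge> m' k + 2"
  shows "lex_less (sconcat (blocks m)) (sconcat (blocks m'))"
proof -
  have "\<exists>k. m k \<noteq> m' k" using ne by auto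
  define k where "k = (LEAST k. m k \<noteq> m' k)"
  have dk: "m k \<noteq> m' k" unfolding k_def by (rule LeastI_ex) fact
  have pre: "\<And>j. j < k \<Longrightarrow> m j = m' j" unfolding k_def using not_less_Least by blast
  have pp: "\<And>j. j < k \<Longrightarrow> pos m j = pos m' j" using pos_eq_prefix[of k m m'] pre by blast
  have lo_eq: "lo m k = lo m' k" using pp[of "k - 1"] by (simp add: lo_def)
  have mk: "m k \<ge> m' k + 2" using big dk by auto
  define n where "n = pos m' k"
  have pl: "pos m k > n" using pos_lo[of m k] pos_lo[of m' k] lo_eq mk by (simp add: n_def)
  show ?thesis unfolding lex_less_def
  proof (intro exI conjI allI impI)
    show "sconcat (blocks m') n" by (simp add: sconcat_blocks n_def)
    show "\<not> sconcat (blocks m) n"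
      unfolding sconcat_blocks
    proof (rule not_in_between)
      show "n < pos m k" by (rule pl)
      show "k > 0 \<Longrightarrow> pos m (k - 1) < n"
        using pp[of "k - 1"] pos_sm[of m'] by (simp add: n_def strict_mono_less)
    qed
    fix i assume i: "i < n"
    have "i \<in> range (pos m) \<longleftrightarrow> (\<exists>j<k. i = pos m j)"
    proof
      assume "i \<in> range (pos m)"
      then obtain j where j: "i = pos m j" by auto
      have "j < k"
      proof (rule ccontr)
        assume "\<not> j < k"
        then have "pos m k \<le> pos m j" using pos_sm[of m] by (simp add: strict_mono_less_eq)
        with j i pl show False by auto
      qed
      with j show "\<exists>j<k. i = pos m j" by auto
    qed auto
    moreover have "i \<in> range (pos m') \<longleftrightarrow> (\<exists>j<k. i = pos m' j)"
    proof
      assume "i \<in> range (pos m')"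
      then obtain j where j: "i = pos m' j" by auto
      have "j < k"
      proof (rule ccontr)
        assume "\<not> j < k"
        then have "pos m' k \<le> pos m' j" using pos_sm[of m'] by (simp add: strict_mono_less_eq)
        with j i show False by (auto simp: n_def)
      qed
      with j show "\<exists>j<k. i = pos m' j" by auto
    qed auto
    ultimately show "sconcat (blocks m) i = sconcat (blocks m') i"
      using pp by (auto simp: sconcat_blocks)
  qed
qed

lemma uncountable_nat_fun: "uncountable (UNIV :: (nat \<Rightarrow> nat) set)"
proof
  assume "countable (UNIV :: (nat \<Rightarrow> nat) set)"
  then obtain h :: "nat \<Rightarrow> (nat \<Rightarrow> nat)" where "range h = UNIV"
    using uncountable_def[of "UNIV :: (nat \<Rightarrow> nat) set"] by blast
  then obtain k where "h k = (\<lambda>n. Suc (h n n))" by (metis UNIV_I imageE)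
  then have "h k k = Suc (h k k)" by (metis)
  then show False by simp
qed

theorem proposition2p2:
  fixes b :: "nat \<Rightarrow> bool"
  defines "F \<equiv> {v \<in> C_set. rho v = b}"
  shows "F = {insert_zeros a (sigma b) | a. True}
    \<and> uncountable F
    \<and> sigma b \<in> F \<and> no_two_zeros (sigma b)
    \<and> (\<forall>v\<in>F. no_two_zeros v \<longrightarrow> v = sigma b)
    \<and> (\<forall>v\<in>F. v \<noteq> sigma b \<longrightarrow> lex_less v (sigma b))"
proof -
  have inF: "insert_zeros a (sigma b) \<in> F" for a
    unfolding F_def insert_blocks using blocks_C parity by (simp add: rho_blocks)
  have Feq: "F = {insert_zeros a (sigma b) | a. True}"
    using inF F_char unfolding F_def by blast
  have sig0: "sigma b = insert_zeros (\<lambda>_. 0) (sigma b)"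
    unfolding insert_blocks by (simp add: sigma_blocks)
  have inj: "inj (\<lambda>a. insert_zeros a (sigma b))"
  proof
    fix a a' assume "insert_zeros a (sigma b) = insert_zeros a' (sigma b)"
    then have "pos (\<lambda>k. 2 * a k + ms b k) = pos (\<lambda>k. 2 * a' k + ms b k)"
      unfolding insert_blocks by (metis blocks_onepos)
    then have "(\<lambda>k. 2 * a k + ms b k) = (\<lambda>k. 2 * a' k + ms b k)" by (rule pos_inj)
    then show "a = a'" by (metis (no_types, lifting) add_right_cancel mult_left_cancel zero_neq_numeral ext)
  qed
  have unc: "uncountable F"
  proof
    assume "countable F"
    then obtain f :: "_ \<Rightarrow> nat" where f: "inj_on f F" by (rule countableE)
    have "inj (f \<circ> (\<lambda>a. insert_zeros a (sigma b)))"
      using inj f inF by (auto simp: inj_on_def)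
    then have "countable (UNIV :: (nat \<Rightarrow> nat) set)" by (rule countableI)
    with uncountable_nat_fun show False by simp
  qed
  have msle: "ms b k \<le> 1" for k by (simp add: ms_def)
  have no2: "no_two_zeros (sigma b)" unfolding sigma_blocks by (rule no2_blocks) (rule msle)
  have uniq: "\<forall>v\<in>F. no_two_zeros v \<longrightarrow> v = sigma b"
  proof (intro ballI impI)
    fix v assume "v \<in> F" "no_two_zeros v"
    then obtain a where v: "v = insert_zeros a (sigma b)" using Feq by auto
    have le1: "2 * a k + ms b k \<le> 1" for k
      using \<open>no_two_zeros v\<close> unfolding v insert_blocks by (rule no2_imp)
    have "a k = 0" for k using le1[of k] by linarith
    then have "a = (\<lambda>_. 0)" by auto
    then show "v = sigma b" using v sig0[symmetric] by simp
  qed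
  have lex: "\<forall>v\<in>F. v \<noteq> sigma b \<longrightarrow> lex_less v (sigma b)"
  proof (intro ballI impI)
    fix v assume "v \<in> F" "v \<noteq> sigma b"
    then obtain a where v: "v = insert_zeros a (sigma b)" using Feq by auto
    have ne: "(\<lambda>k. 2 * a k + ms b k) \<noteq> ms b" using \<open>v \<noteq> sigma b\<close> v
      by (metis insert_blocks sigma_blocks)
    have "lex_less (sconcat (blocks (\<lambda>k. 2 * a k + ms b k))) (sconcat (blocks (ms b)))"
    proof (rule lex_blocks)
      show "\<And>k. ms b k \<le> 2 * a k + ms b k" by simp
      show "\<And>k. ms b k \<noteq> 2 * a k + ms b k \<Longrightarrow> 2 * a k + ms b k \<ge> ms b k + 2" by simp
    qed (rule ne)
    moreover have "v = sconcat (blocks (\<lambda>k. 2 * a k + ms b k))" using v insert_blocks by simp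
    ultimately show "lex_less v (sigma b)" by (simp only: sigma_blocks)
  qed
  have sigF: "sigma b \<in> F" using inF[of "\<lambda>_. 0"] by (simp only: sig0[symmetric])
  show ?thesis using Feq unc sigF no2 uniq lex by blast
qed

end
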